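(* Over the family of 3-periodics of $E$: (i) the locus of the barycenter $X_2$ (triangle center function $h=1/s_1$) is the ellipse $x^2/(k_2a)^2+y^2/(k_2b)^2=1$ with $k_2=\dfrac{2\delta-a^2-b^2}{3c^2}$; (ii) the locus of the Gergonne point $X_7$ ($h=\dfrac{1}{s_1(s_2+s_3-s_1)}$) is the ellipse $x^2/(k_7a)^2+y^2/(k_7b)^2=1$ with $k_7=\dfrac{2\delta-a^2-b^2}{c^2}$; (iii) the locus of $X_{57}$ ($h=\dfrac{1}{s_2+s_3-s_1}$) is the ellipse $x^2/(k_{57}a)^2+y^2/(k_{57}b)^2=1$ with $k_{57}=\dfrac{c^2}{\delta}$. In particular each of these loci is an ellipse similar to $E$ (concentric and axis-aligned with it).
   Context: Fix real numbers $a>b>0$, let $E$ be the ellipse $x^2/a^2+y^2/b^2=1$, $c^2=a^2-b^2$ and $\delta=\sqrt{a^4-a^2b^2+b^4}$. A 3-periodic is a non-degenerate triangle $P_1P_2P_3$ with all vertices on $E$ such that at each vertex $P_j$ the normal line to $E$ at $P_j$ bisects the interior angle of the triangle at $P_j$. For a triangle let $s_1=|P_2P_3|$, $s_2=|P_3P_1|$, $s_3=|P_1P_2|$. Given a triangle center function $h(s_1,s_2,s_3)$, the center $X_h$ is the point with trilinears $p:q:r=h(s_1,s_2,s_3):h(s_2,s_3,s_1):h(s_3,s_1,s_2)$, i.e. the Cartesian point $\dfrac{p s_1P_1+q s_2P_2+r s_3P_3}{p s_1+q s_2+r s_3}$. The locus of $X_h$ is the set of points $X_h(T)$ over all 3-periodics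 $T$. *)

theory Defs
  imports "HOL-Analysis.Analysis"
begin

type_synonym pt = "real \<times> real"

definition ellipse_set :: "real \<Rightarrow> real \<Rightarrow> pt set" where
  "ellipse_set A B = {p. (fst p)\<^sup>2 / A\<^sup>2 + (snd p)\<^sup>2 / B\<^sup>2 = 1}"

definition cross2 :: "pt \<Rightarrow> pt \<Rightarrow> real" where
  "cross2 u v = fst u * snd v - snd u * fst v"

definition nondegenerate :: "pt \<Rightarrow> pt \<Rightarrow> pt \<Rightarrow> bool" where
  "nondegenerate P Q R \<longleftrightarrow> cross2 (Q - P) (R - P) \<noteq> 0"

definition ellipse_normal :: "real \<Rightarrow> real \<Rightarrow> pt \<Rightarrow> pt" where
  "ellipse_normal a b P = (fst P / a\<^sup>2, snd P / b\<^sup>2)"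

text \<open>The normal line at P bisects the interior angle QPR: the normal direction is
  parallel to the internal bisector direction (sum of unit vectors from P towards Q and R).\<close>
definition normal_bisects :: "real \<Rightarrow> real \<Rightarrow> pt \<Rightarrow> pt \<Rightarrow> pt \<Rightarrow> bool" where
  "normal_bisects a b P Q R \<longleftrightarrow>
     cross2 (ellipse_normal a b P)
       ((1 / dist Q P) *\<^sub>R (Q - P) + (1 / dist R P) *\<^sub>R (R - P)) = 0"

definition periodic3 :: "real \<Rightarrow> real \<Rightarrow> pt \<Rightarrow> pt \<Rightarrow> pt \<Rightarrow> bool" where
  "periodic3 a b P1 P2 P3 \<longleftrightarrow>
     nondegenerate P1 P2 P3 \<and>
     P1 \<in> ellipse_set a b \<and> P2 \<in> ellipse_set a b \<and> P3 \<in> ellipse_set a b \<and>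
     normal_bisects a b P1 P2 P3 \<and> normal_bisects a b P2 P3 P1 \<and>
     normal_bisects a b P3 P1 P2"

text \<open>Triangle center with trilinears h(s1,s2,s3):h(s2,s3,s1):h(s3,s1,s2).\<close>
definition tri_center :: "(real \<Rightarrow> real \<Rightarrow> real \<Rightarrow> real) \<Rightarrow> pt \<Rightarrow> pt \<Rightarrow> pt \<Rightarrow> pt" where
  "tri_center h P1 P2 P3 =
    (let s1 = dist P2 P3; s2 = dist P3 P1; s3 = dist P1 P2;
         p = h s1 s2 s3; q = h s2 s3 s1; r = h s3 s1 s2
     in (1 / (p * s1 + q * s2 + r * s3)) *\<^sub>R
          ((p * s1) *\<^sub>R P1 + (q * s2) *\<^sub>R P2 + (r * s3) *\<^sub>R P3))"

definition center_locus :: "real \<Rightarrow> real \<Rightarrow> (real \<Rightarrow> real \<Rightarrow> real \<Rightarrow> real) \<Rightarrow> pt set" where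
  "center_locus a b h = {tri_center h P1 P2 P3 | P1 P2 P3. periodic3 a b P1 P2 P3}"

end

theory Submission
  imports Defs "HOL-Computational_Algebra.Fundamental_Theorem_Algebra"
begin


lemma bisect_fwd:
  fixes n1 n2 E1 E2 F1 F2 :: real
  assumes "E1^2+E2^2 = 1" "F1^2+F2^2=1" "n1*(E2+F2) - n2*(E1+F1) = 0"
  shows "n1*E1+n2*E2 = n1*F1+n2*F2 \<or> (E1+F1=0 \<and> E2+F2=0)"
proof -
  have I: "(n1*(E1-F1)+n2*(E2-F2))*((E1+F1)^2+(E2+F2)^2) = (n1*(E1+F1)+n2*(E2+F2))*((E1^2+E2^2)-(F1^2+F2^2)) + (n1*(E2+F2) - n2*(E1+F1))*((E1-F1)*(E2+F2)-(E2-F2)*(E1+F1))"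
    by algebra
  hence "(n1*(E1-F1)+n2*(E2-F2))*((E1+F1)^2+(E2+F2)^2) = 0" using assms by simp
  hence "n1*(E1-F1)+n2*(E2-F2) = 0 \<or> (E1+F1)^2+(E2+F2)^2 = 0" by simp
  thus ?thesis
  proof
    assume "n1*(E1-F1)+n2*(E2-F2) = 0" thus ?thesis by (simp add: algebra_simps)
  next
    assume "(E1+F1)^2+(E2+F2)^2 = 0" thus ?thesis by simp
  qed
qed

lemma bisect_bwd:
  fixes n1 n2 E1 E2 F1 F2 :: real
  assumes "E1^2+E2^2 = 1" "F1^2+F2^2=1" "n1*E1+n2*E2 = n1*F1+n2*F2"
  shows "n1*(E2+F2) - n2*(E1+F1) = 0 \<or> (E1=F1 \<and> E2=F2)"
proof -
  have I: "(n1*(E2+F2) - n2*(E1+F1))*((E1-F1)^2+(E2-F2)^2) = (n1*(E1-F1)+n2*(E2-F2))*((E1-F1)*(E2+F2)-(E2-F2)*(E1+F1)) + ((E1^2+E2^2)-(F1^2+F2^2))*(n1*(E2-F2)-n2*(E1-F1))"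
    by algebra
  have h1: "n1*(E1-F1)+n2*(E2-F2) = 0" using assms(3) by (simp add: algebra_simps)
  have h2: "(E1^2+E2^2)-(F1^2+F2^2) = 0" using assms(1,2) by simp
  have "(n1*(E2+F2) - n2*(E1+F1))*((E1-F1)^2+(E2-F2)^2) = 0" using I unfolding h1 h2 by simp
  hence "n1*(E2+F2) - n2*(E1+F1) = 0 \<or> (E1-F1)^2+(E2-F2)^2 = 0" by simp
  thus ?thesis by auto
qed



definition Wf :: "real \<Rightarrow> real \<Rightarrow> pt \<Rightarrow> pt \<Rightarrow> real" where
  "Wf a b P Q = 1 - (fst P * fst Q / a^2 + snd P * snd Q / b^2)"

lemma vertex_setup:
  assumes "a>0" "b>0" "P \<in> ellipse_set a b" "nondegenerate P Q R"
  obtains p1 p2 q1 q2 r1 r2 dQ dR E1 E2 F1 F2 where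
    "P = (p1,p2)" "Q = (q1,q2)" "R = (r1,r2)" "dQ = dist Q P" "dR = dist R P"
    "dQ > 0" "dR > 0" "E1 = (q1-p1)/dQ" "E2 = (q2-p2)/dQ" "F1 = (r1-p1)/dR" "F2 = (r2-p2)/dR"
    "E1^2+E2^2 = 1" "F1^2+F2^2 = 1" "E1*F2 - E2*F1 \<noteq> 0"
    "(p1/a^2)*E1 + (p2/b^2)*E2 = - Wf a b P Q / dQ"
    "(p1/a^2)*F1 + (p2/b^2)*F2 = - Wf a b P R / dR"
    "normal_bisects a b P Q R \<longleftrightarrow> (p1/a^2)*(E2+F2) - (p2/b^2)*(E1+F1) = 0"
proof -
  obtain p1 p2 where P: "P = (p1,p2)" by (cases P)
  obtain q1 q2 where Q: "Q = (q1,q2)" by (cases Q)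
  obtain r1 r2 where R: "R = (r1,r2)" by (cases R)
  define dQ where "dQ = dist Q P"
  define dR where "dR = dist R P"
  have dQe: "dQ = sqrt((q1-p1)^2+(q2-p2)^2)" by (simp add: dQ_def P Q dist_Pair_Pair dist_real_def)
  have dRe: "dR = sqrt((r1-p1)^2+(r2-p2)^2)" by (simp add: dR_def P R dist_Pair_Pair dist_real_def)
  have nd: "(q1-p1)*(r2-p2) - (q2-p2)*(r1-p1) \<noteq> 0"
    using assms(4) by (simp add: nondegenerate_def cross2_def P Q R)
  have dQ2: "dQ^2 = (q1-p1)^2+(q2-p2)^2" by (simp add: dQe)
  have dR2: "dR^2 = (r1-p1)^2+(r2-p2)^2" by (simp add: dRe)
  have "dQ \<noteq> 0"
  proof
    assume "dQ = 0" hence "q1 = p1 \<and> q2 = p2" using dQ2 by simp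
    thus False using nd by simp
  qed
  moreover have "dQ \<ge> 0" unfolding dQ_def by simp
  ultimately have dQp: "dQ > 0" by linarith
  have "dR \<noteq> 0"
  proof
    assume "dR = 0" hence "r1 = p1 \<and> r2 = p2" using dR2 by simp
    thus False using nd by simp
  qed
  moreover have "dR \<ge> 0" unfolding dR_def by simp
  ultimately have dRp: "dR > 0" by linarith
  define E1 where "E1 = (q1-p1)/dQ"
  define E2 where "E2 = (q2-p2)/dQ"
  define F1 where "F1 = (r1-p1)/dR"
  define F2 where "F2 = (r2-p2)/dR"
  have "E1^2+E2^2 = ((q1-p1)^2+(q2-p2)^2)/dQ^2" by (simp add: E1_def E2_def power_divide add_divide_distrib)
  hence E: "E1^2+E2^2 = 1" using dQp by (simp add: dQ2[symmetric])
  have "F1^2+F2^2 = ((r1-p1)^2+(r2-p2)^2)/dR^2" by (simp add: F1_def F2_def power_divide add_divide_distrib)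
  hence F: "F1^2+F2^2 = 1" using dRp by (simp add: dR2[symmetric])
  have cr: "E1*F2 - E2*F1 = ((q1-p1)*(r2-p2) - (q2-p2)*(r1-p1)) / (dQ*dR)"
    using dQp dRp by (simp add: E1_def E2_def F1_def F2_def field_simps)
  hence crn: "E1*F2 - E2*F1 \<noteq> 0" using nd dQp dRp by simp
  have ell: "p1^2/a^2 + p2^2/b^2 = 1" using assms(3) by (simp add: ellipse_set_def P)
  have nE: "(p1/a^2)*E1 + (p2/b^2)*E2 = - Wf a b P Q / dQ"
  proof -
    have "(p1/a^2)*E1 + (p2/b^2)*E2 = ((p1*q1/a^2 + p2*q2/b^2) - (p1^2/a^2 + p2^2/b^2))/dQ"
      using dQp assms(1,2) by (simp add: E1_def E2_def field_simps power2_eq_square)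
    also have "\<dots> = - Wf a b P Q / dQ" by (simp add: ell Wf_def P Q)
    finally show ?thesis .
  qed
  have nF: "(p1/a^2)*F1 + (p2/b^2)*F2 = - Wf a b P R / dR"
  proof -
    have "(p1/a^2)*F1 + (p2/b^2)*F2 = ((p1*r1/a^2 + p2*r2/b^2) - (p1^2/a^2 + p2^2/b^2))/dR"
      using dRp assms(1,2) by (simp add: F1_def F2_def field_simps power2_eq_square)
    also have "\<dots> = - Wf a b P R / dR" by (simp add: ell Wf_def P R)
    finally show ?thesis .
  qed
  have dQ': "dist (q1,q2) (p1,p2) = dQ" by (simp add: dQ_def P Q)
  have dR': "dist (r1,r2) (p1,p2) = dR" by (simp add: dR_def P R)
  have nb: "normal_bisects a b P Q R \<longleftrightarrow> (p1/a^2)*(E2+F2) - (p2/b^2)*(E1+F1) = 0"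
    by (simp add: normal_bisects_def cross2_def ellipse_normal_def P Q R E1_def E2_def F1_def F2_def
        dQ' dR' algebra_simps)
  show ?thesis
    by (rule that[OF P Q R dQ_def dR_def dQp dRp E1_def E2_def F1_def F2_def E F crn nE nF nb])
qed

lemma vertex_fwd:
  assumes "a>0" "b>0" "P \<in> ellipse_set a b" "nondegenerate P Q R" "normal_bisects a b P Q R"
  shows "Wf a b P Q * dist R P = Wf a b P R * dist Q P"
proof -
  obtain p1 p2 q1 q2 r1 r2 dQ dR E1 E2 F1 F2 where
    S: "P = (p1,p2)" "Q = (q1,q2)" "R = (r1,r2)" "dQ = dist Q P" "dR = dist R P"
    "dQ > 0" "dR > 0" "E1 = (q1-p1)/dQ" "E2 = (q2-p2)/dQ" "F1 = (r1-p1)/dR" "F2 = (r2-p2)/dR"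
    "E1^2+E2^2 = 1" "F1^2+F2^2 = 1" "E1*F2 - E2*F1 \<noteq> 0"
    "(p1/a^2)*E1 + (p2/b^2)*E2 = - Wf a b P Q / dQ"
    "(p1/a^2)*F1 + (p2/b^2)*F2 = - Wf a b P R / dR"
    "normal_bisects a b P Q R \<longleftrightarrow> (p1/a^2)*(E2+F2) - (p2/b^2)*(E1+F1) = 0"
    using vertex_setup[OF assms(1-4)] by blast
  have "(p1/a^2)*(E2+F2) - (p2/b^2)*(E1+F1) = 0" using S(17) assms(5) by simp
  from bisect_fwd[OF S(12,13) this]
  have "(p1/a^2)*E1 + (p2/b^2)*E2 = (p1/a^2)*F1 + (p2/b^2)*F2"
  proof
    assume "E1+F1=0 \<and> E2+F2=0"
    hence "E1*F2 - E2*F1 = 0" by (simp add: algebra_simps eq_neg_iff_add_eq_0[symmetric])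
    thus ?thesis using S(14) by simp
  qed
  hence "Wf a b P Q / dQ = Wf a b P R / dR" using S(15,16) by simp
  thus ?thesis using S(4-7) by (simp add: field_simps)
qed

lemma vertex_bwd:
  assumes "a>0" "b>0" "P \<in> ellipse_set a b" "nondegenerate P Q R"
    "Wf a b P Q * dist R P = Wf a b P R * dist Q P"
  shows "normal_bisects a b P Q R"
proof -
  obtain p1 p2 q1 q2 r1 r2 dQ dR E1 E2 F1 F2 where
    S: "P = (p1,p2)" "Q = (q1,q2)" "R = (r1,r2)" "dQ = dist Q P" "dR = dist R P"
    "dQ > 0" "dR > 0" "E1 = (q1-p1)/dQ" "E2 = (q2-p2)/dQ" "F1 = (r1-p1)/dR" "F2 = (r2-p2)/dR"
    "E1^2+E2^2 = 1" "F1^2+F2^2 = 1" "E1*F2 - E2*F1 \<noteq> 0"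
    "(p1/a^2)*E1 + (p2/b^2)*E2 = - Wf a b P Q / dQ"
    "(p1/a^2)*F1 + (p2/b^2)*F2 = - Wf a b P R / dR"
    "normal_bisects a b P Q R \<longleftrightarrow> (p1/a^2)*(E2+F2) - (p2/b^2)*(E1+F1) = 0"
    using vertex_setup[OF assms(1-4)] by blast
  have "Wf a b P Q / dQ = Wf a b P R / dR" using assms(5) S(4-7) by (simp add: field_simps)
  hence "(p1/a^2)*E1 + (p2/b^2)*E2 = (p1/a^2)*F1 + (p2/b^2)*F2" using S(15,16) by simp
  from bisect_bwd[OF S(12,13) this]
  have "(p1/a^2)*(E2+F2) - (p2/b^2)*(E1+F1) = 0"
  proof
    assume "E1 = F1 \<and> E2 = F2"
    hence "E1*F2 - E2*F1 = 0" by (simp add: algebra_simps)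
    thus ?thesis using S(14) by simp
  qed
  thus ?thesis using S(17) by simp
qed



lemma rels_from_pairs:
  fixes z1 z2 z3 C K M :: complex
  assumes d: "z1\<noteq>z2" "z1\<noteq>z3" "z2\<noteq>z3"
  and R12: "C*(z1^2*z2^2+1) - M*(z1^2+z2^2) = 2*(K-M)*z1*z2"
  and R13: "C*(z1^2*z3^2+1) - M*(z1^2+z3^2) = 2*(K-M)*z1*z3"
  and R23: "C*(z2^2*z3^2+1) - M*(z2^2+z3^2) = 2*(K-M)*z2*z3"
  shows "M*(z1*z2+z1*z3+z2*z3) = -C" "C*(z1*z2+z1*z3+z2*z3) = 2*K-3*M" "M*(z1+z2+z3) + C*(z1*z2*z3) = 0"
proof -
  have "(z2-z3)*((C*z1^2-M)*(z2+z3) - 2*(K-M)*z1) = 0" using R12 R13 by algebra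
  hence A1: "(C*z1^2-M)*(z2+z3) = 2*(K-M)*z1" using d by simp
  have "(z1-z3)*((C*z2^2-M)*(z1+z3) - 2*(K-M)*z2) = 0" using R12 R23 by algebra
  hence A2: "(C*z2^2-M)*(z1+z3) = 2*(K-M)*z2" using d by simp
  have "(z2-z3)*((C*z1^2-M)*(z2*z3) - (C-M*z1^2)) = 0" using R12 R13 by algebra
  hence B1: "(C*z1^2-M)*(z2*z3) = C-M*z1^2" using d by simp
  have "(z1-z3)*((C*z2^2-M)*(z1*z3) - (C-M*z2^2)) = 0" using R12 R23 by algebra
  hence B2: "(C*z2^2-M)*(z1*z3) = C-M*z2^2" using d by simp
  have "(z1-z2)*((C*z3^2-M)*(z1*z2) - (C-M*z3^2)) = 0" using R13 R23 by algebra
  hence B3: "(C*z3^2-M)*(z1*z2) = C-M*z3^2" using d by simp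
  have f1: "M*z1^3 + C*(z1*z2*z3)*z1^2 - C*z1 - M*(z1*z2*z3) = 0" using B1 by algebra
  have f2: "M*z2^3 + C*(z1*z2*z3)*z2^2 - C*z2 - M*(z1*z2*z3) = 0" using B2 by algebra
  have f3: "M*z3^3 + C*(z1*z2*z3)*z3^2 - C*z3 - M*(z1*z2*z3) = 0" using B3 by algebra
  have "(z1-z2)*(M*(z1^2+z1*z2+z2^2) + C*(z1*z2*z3)*(z1+z2) - C) = 0" using f1 f2 by algebra
  hence g12: "M*(z1^2+z1*z2+z2^2) + C*(z1*z2*z3)*(z1+z2) - C = 0" using d by simp
  have "(z1-z3)*(M*(z1^2+z1*z3+z3^2) + C*(z1*z2*z3)*(z1+z3) - C) = 0" using f1 f3 by algebra
  hence g13: "M*(z1^2+z1*z3+z3^2) + C*(z1*z2*z3)*(z1+z3) - C = 0" using d by simp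
  have "(z2-z3)*(M*(z1+z2+z3) + C*(z1*z2*z3)) = 0" using g12 g13 by algebra
  thus g: "M*(z1+z2+z3) + C*(z1*z2*z3) = 0" using d by simp
  show "M*(z1*z2+z1*z3+z2*z3) = -C" using g12 g by algebra
  have h1: "C*z1^3 - C*(z1+z2+z3)*z1^2 + (2*K-3*M)*z1 + M*(z1+z2+z3) = 0" using A1 by algebra
  have h2: "C*z2^3 - C*(z1+z2+z3)*z2^2 + (2*K-3*M)*z2 + M*(z1+z2+z3) = 0" using A2 by algebra
  have "(z1-z2)*(C*(z1*z2+z1*z3+z2*z3) - (2*K-3*M)) = 0" using h1 h2 by algebra
  thus "C*(z1*z2+z1*z3+z2*z3) = 2*K-3*M" using d by simp
qed

lemma unit_nz: "X^2+Y^2 = (1::real) \<Longrightarrow> Complex X Y \<noteq> 0"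
  by (auto simp: complex_eq_iff)

lemma pairR_fwd:
  fixes X1 Y1 X2 Y2 K C M :: real
  assumes "X1^2+Y1^2=1" "X2^2+Y2^2=1" "K - C*(X1*X2-Y1*Y2) = M*(1 - X1*X2 - Y1*Y2)"
  shows "of_real C*((Complex X1 Y1)^2*(Complex X2 Y2)^2+1) - of_real M*((Complex X1 Y1)^2+(Complex X2 Y2)^2)
     = 2*(of_real K - of_real M)*Complex X1 Y1*Complex X2 Y2"
  using assms by (simp add: complex_eq_iff power2_eq_square) algebra

lemma pairR_bwd:
  fixes X1 Y1 X2 Y2 r :: real
  assumes u: "X1^2+Y1^2=1" "X2^2+Y2^2=1"
  and R: "of_real r*((Complex X1 Y1)^2*(Complex X2 Y2)^2+1) - ((Complex X1 Y1)^2+(Complex X2 Y2)^2) - (1-(of_real r)^2)*Complex X1 Y1*Complex X2 Y2 = 0"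
  shows "r*(X1*X2-Y1*Y2) - (X1*X2+Y1*Y2) = (1-r^2)/2"
proof -
  have "of_real r*((Complex X1 Y1)^2*(Complex X2 Y2)^2+1) - ((Complex X1 Y1)^2+(Complex X2 Y2)^2) - (1-(of_real r)^2)*Complex X1 Y1*Complex X2 Y2
    = Complex X1 Y1*Complex X2 Y2* of_real(2*(r*(X1*X2-Y1*Y2) - (X1*X2+Y1*Y2)) - (1-r^2))"
    using u by (simp add: complex_eq_iff power2_eq_square) algebra
  with R have "Complex X1 Y1*Complex X2 Y2* of_real(2*(r*(X1*X2-Y1*Y2) - (X1*X2+Y1*Y2)) - (1-r^2)) = 0" by simp
  hence "(complex_of_real(2*(r*(X1*X2-Y1*Y2) - (X1*X2+Y1*Y2)) - (1-r^2))) = 0"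
    using unit_nz[OF u(1)] unit_nz[OF u(2)] by simp
  hence "2*(r*(X1*X2-Y1*Y2) - (X1*X2+Y1*Y2)) - (1-r^2) = 0" by (metis of_real_eq_0_iff)
  thus ?thesis by simp
qed

lemma vieta_R:
  fixes z1 z2 z3 r :: complex
  assumes "z1*z2+z1*z3+z2*z3 = -r" "z1+z2+z3 = -r*(z1*z2*z3)"
  shows "r*(z1^2*z2^2+1) - (z1^2+z2^2) - (1-r^2)*z1*z2 = 0"
  using assms by algebra

lemma uc_formula:
  fixes z1 z2 z3 :: complex
  assumes "z1\<noteq>0" "z2\<noteq>0" "z3\<noteq>0"
  shows "(1 - (z1/z2+z2/z1)/2) + (1 - (z1/z3+z3/z1)/2) - (1 - (z2/z3+z3/z2)/2)
       = - ((z1-z2)*(z1-z3)*(z2+z3))/(2*(z1*z2*z3))"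
  using assms by (simp add: field_simps; algebra)

lemma frac_ext: "(c::complex) \<noteq> 0 \<Longrightarrow> a*c = D \<Longrightarrow> x/a = (x*c)/D"
  by auto

lemma sum_ids:
  fixes z1 z2 z3 :: complex
  assumes d: "z1\<noteq>z2" "z1\<noteq>z3" "z2\<noteq>z3" "z1+z2\<noteq>0" "z1+z3\<noteq>0" "z2+z3\<noteq>0"
  shows "z1/((z1-z2)*(z1-z3)*(z2+z3))+z2/((z2-z1)*(z2-z3)*(z1+z3))+z3/((z3-z1)*(z3-z2)*(z1+z2))
       = (z1+z2+z3)*(1/((z1-z2)*(z1-z3)*(z2+z3))+1/((z2-z1)*(z2-z3)*(z1+z3))+1/((z3-z1)*(z3-z2)*(z1+z2)))"
    and "1/((z1-z2)*(z1-z3)*(z2+z3))+1/((z2-z1)*(z2-z3)*(z1+z3))+1/((z3-z1)*(z3-z2)*(z1+z2))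
       = 1/((z1+z2)*(z1+z3)*(z2+z3))"
proof -
  define D where "D = (z1-z2)*(z1-z3)*(z2-z3)*(z1+z2)*(z1+z3)*(z2+z3)"
  define Q1 where "Q1 = (z2-z3)*(z1+z2)*(z1+z3)"
  define Q2 where "Q2 = -(z1-z3)*(z1+z2)*(z2+z3)"
  define Q3 where "Q3 = (z1-z2)*(z1+z3)*(z2+z3)"
  define Q0 where "Q0 = (z1-z2)*(z1-z3)*(z2-z3)"
  have n: "z1-z2\<noteq>0" "z1-z3\<noteq>0" "z2-z3\<noteq>0" using d by auto
  have q: "Q1 \<noteq> 0" "Q2 \<noteq> 0" "Q3 \<noteq> 0" "Q0 \<noteq> 0"
    using d n unfolding Q1_def Q2_def Q3_def Q0_def by auto
  have f1: "\<And>x. x/((z1-z2)*(z1-z3)*(z2+z3)) = (x*Q1)/D"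
    by (rule frac_ext[OF q(1)]) (unfold Q1_def D_def, algebra)
  have f2: "\<And>x. x/((z2-z1)*(z2-z3)*(z1+z3)) = (x*Q2)/D"
    by (rule frac_ext[OF q(2)]) (unfold Q2_def D_def, algebra)
  have f3: "\<And>x. x/((z3-z1)*(z3-z2)*(z1+z2)) = (x*Q3)/D"
    by (rule frac_ext[OF q(3)]) (unfold Q3_def D_def, algebra)
  have f0: "\<And>x. x/((z1+z2)*(z1+z3)*(z2+z3)) = (x*Q0)/D"
    by (rule frac_ext[OF q(4)]) (unfold Q0_def D_def, algebra)
  have L: "z1*Q1+z2*Q2+z3*Q3 = (z1+z2+z3)*(Q1+Q2+Q3)" unfolding Q1_def Q2_def Q3_def by algebra
  have G: "Q1+Q2+Q3 = Q0" unfolding Q1_def Q2_def Q3_def Q0_def by algebra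
  show "z1/((z1-z2)*(z1-z3)*(z2+z3))+z2/((z2-z1)*(z2-z3)*(z1+z3))+z3/((z3-z1)*(z3-z2)*(z1+z2))
       = (z1+z2+z3)*(1/((z1-z2)*(z1-z3)*(z2+z3))+1/((z2-z1)*(z2-z3)*(z1+z3))+1/((z3-z1)*(z3-z2)*(z1+z2)))"
    unfolding f1 f2 f3 using L by (simp add: add_divide_distrib[symmetric] times_divide_eq_right)
  show "1/((z1-z2)*(z1-z3)*(z2+z3))+1/((z2-z1)*(z2-z3)*(z1+z3))+1/((z3-z1)*(z3-z2)*(z1+z2))
       = 1/((z1+z2)*(z1+z3)*(z2+z3))"
    unfolding f1 f2 f3 f0 using G by (simp add: add_divide_distrib[symmetric])
qed



definition Kc :: "real \<Rightarrow> real \<Rightarrow> real" where "Kc a b = a^2+b^2"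
definition Cc :: "real \<Rightarrow> real \<Rightarrow> real" where "Cc a b = a^2-b^2"
definition dl :: "real \<Rightarrow> real \<Rightarrow> real" where "dl a b = sqrt (a^4 - a^2*b^2 + b^4)"
definition Mc :: "real \<Rightarrow> real \<Rightarrow> real" where "Mc a b = (Kc a b + 2*dl a b)/3"
definition rc :: "real \<Rightarrow> real \<Rightarrow> real" where "rc a b = Cc a b / Mc a b"
definition zc :: "real \<Rightarrow> real \<Rightarrow> pt \<Rightarrow> complex" where "zc a b P = Complex (fst P / a) (snd P / b)"

lemma pos_sq_less: "(x::real)^2 < y^2 \<Longrightarrow> 0 \<le> y \<Longrightarrow> x < y"
proof (rule ccontr)
  assume a: "(x::real)^2 < y^2" "0 \<le> y" "\<not> x < y"
  hence "y \<le> x" by simp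
  hence "y^2 \<le> x^2" using a(2) by (rule power_mono)
  thus False using a(1) by simp
qed

lemma cfacts:
  assumes "a>b" "b>0"
  shows "Kc a b > 0" "Cc a b > 0" "dl a b > 0" "(Kc a b)^2 + 3*(Cc a b)^2 = 4*(dl a b)^2"
    "Mc a b > 0" "2*dl a b > Kc a b" "rc a b > 0" "rc a b < 1"
    "3*(Mc a b)^2 - 2*Kc a b*Mc a b - (Cc a b)^2 = 0"
    "Kc a b = Mc a b*(3-(rc a b)^2)/2" "Cc a b = rc a b * Mc a b"
    "Mc a b / dl a b = 4/(3+(rc a b)^2)"
proof -
  have a0: "a > 0" using assms by linarith
  have "b^2 < a^2" using power_strict_mono[of b a 2] assms by simp
  hence ab: "a > 0" "a^2 > b^2" using a0 by auto
  have pos: "a^4 - a^2*b^2 + b^4 > 0"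
  proof -
    have "a^4 - a^2*b^2 + b^4 = (a^2-b^2)^2 + a^2*b^2" by algebra
    moreover have "a^2*b^2 > 0" using ab assms by simp
    ultimately show ?thesis by (smt (verit) zero_le_power2)
  qed
  have dl2: "(dl a b)^2 = a^4 - a^2*b^2 + b^4" unfolding dl_def using pos by simp
  show K: "Kc a b > 0" unfolding Kc_def using ab(1) by (simp add: add_pos_nonneg)
  show C: "Cc a b > 0" unfolding Cc_def using ab by simp
  show d: "dl a b > 0" unfolding dl_def using pos by simp
  show KC: "(Kc a b)^2 + 3*(Cc a b)^2 = 4*(dl a b)^2" unfolding Kc_def Cc_def dl2 by algebra
  have "(Cc a b)^2 > 0" using C by simp
  moreover have "(2*dl a b)^2 = 4*(dl a b)^2" by (simp add: power_mult_distrib)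
  ultimately have "(Kc a b)^2 < (2*dl a b)^2" using KC by linarith
  hence dK: "2*dl a b > Kc a b" by (rule pos_sq_less) (use d in simp)
  thus "2*dl a b > Kc a b" .
  show M: "Mc a b > 0" unfolding Mc_def using K d by simp
  show "rc a b > 0" unfolding rc_def using C M by simp
  have "(a^2-2*b^2)^2 < (dl a b)^2"
  proof -
    have "(dl a b)^2 - (a^2-2*b^2)^2 = 3*b^2*(a^2-b^2)" unfolding dl2 by algebra
    moreover have "3*b^2*(a^2-b^2) > 0" using ab assms by simp
    ultimately show ?thesis by simp
  qed
  hence "a^2-2*b^2 < dl a b" by (rule pos_sq_less) (use d in simp)
  hence CM: "Cc a b < Mc a b" unfolding Cc_def Mc_def Kc_def by simp
  thus "rc a b < 1" unfolding rc_def using M by simp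
  show Q: "3*(Mc a b)^2 - 2*Kc a b*Mc a b - (Cc a b)^2 = 0"
  proof -
    have "3*(Mc a b)^2 - 2*Kc a b*Mc a b - (Cc a b)^2 = ((2*dl a b)^2 - (Kc a b)^2 - 3*(Cc a b)^2)/3"
      unfolding Mc_def by (simp add: field_simps power2_eq_square)
    thus ?thesis using KC by simp
  qed
  show "Cc a b = rc a b * Mc a b" unfolding rc_def using M by simp
  show "Kc a b = Mc a b*(3-(rc a b)^2)/2"
  proof -
    have "Mc a b*(3-(rc a b)^2)/2 = (3*(Mc a b)^2 - (Cc a b)^2)/(2*Mc a b)"
      unfolding rc_def using M by (simp add: field_simps power2_eq_square)
    also have "3*(Mc a b)^2 - (Cc a b)^2 = 2*Kc a b*Mc a b" using Q by linarith
    finally show ?thesis using M by simp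
  qed
  show "Mc a b / dl a b = 4/(3+(rc a b)^2)"
  proof -
    have "3*(Mc a b)^2 + (Cc a b)^2 = 4*dl a b*Mc a b"
    proof -
      have "3*(Mc a b)^2 + (Cc a b)^2 - 4*dl a b*Mc a b = ((Kc a b)^2 + 3*(Cc a b)^2 - (2*dl a b)^2)/3"
        unfolding Mc_def by (simp add: field_simps power2_eq_square)
      thus ?thesis using KC by simp
    qed
    hence e: "3*(Mc a b)^2 + (Cc a b)^2 = 4*dl a b*Mc a b" .
    have "3+(rc a b)^2 = (3*(Mc a b)^2 + (Cc a b)^2)/(Mc a b)^2"
      unfolding rc_def using M by (simp add: field_simps power2_eq_square)
    also have "\<dots> = 4*dl a b/Mc a b" unfolding e using M by (simp add: power2_eq_square)
    finally show ?thesis using M d by simp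
  qed
qed

lemma zc_unit:
  assumes "a>0" "b>0" "P \<in> ellipse_set a b"
  shows "(fst P/a)^2 + (snd P/b)^2 = 1"
  using assms by (simp add: ellipse_set_def power_divide)

lemma zc_eq: "zc a b P = Complex (fst P/a) (snd P/b)" by (simp add: zc_def)

lemma zc_inj: "a \<noteq> 0 \<Longrightarrow> b \<noteq> 0 \<Longrightarrow> zc a b P = zc a b Q \<Longrightarrow> P = Q"
  by (simp add: zc_def complex_eq_iff prod_eq_iff)

lemma zc_add: "zc a b (P+Q) = zc a b P + zc a b Q"
  by (simp add: zc_def complex_eq_iff add_divide_distrib)

lemma zc_scale: "zc a b (c *\<^sub>R P) = of_real c * zc a b P"
  by (simp add: zc_def complex_eq_iff)

lemma Wf_eq: "a \<noteq> 0 \<Longrightarrow> b \<noteq> 0 \<Longrightarrow> Wf a b P Q = 1 - ((fst P/a)*(fst Q/a) + (snd P/b)*(snd Q/b))"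
  by (simp add: Wf_def power2_eq_square)

lemma dist_eq:
  assumes "a>0" "b>0" "P \<in> ellipse_set a b" "Q \<in> ellipse_set a b"
  shows "(dist P Q)^2 = Wf a b P Q * (Kc a b - Cc a b*((fst P/a)*(fst Q/a) - (snd P/b)*(snd Q/b)))"
proof -
  define X1 Y1 X2 Y2 where "X1 = fst P/a" "Y1 = snd P/b" "X2 = fst Q/a" "Y2 = snd Q/b"
  have u: "X1^2+Y1^2=1" "X2^2+Y2^2=1" using zc_unit[OF assms(1,2,3)] zc_unit[OF assms(1,2,4)]
    by (simp_all add: X1_Y1_X2_Y2_def)
  have P: "fst P = a*X1" "snd P = b*Y1" "fst Q = a*X2" "snd Q = b*Y2" using assms(1,2) by (simp_all add: X1_Y1_X2_Y2_def)
  have "(dist P Q)^2 = (fst P - fst Q)^2 + (snd P - snd Q)^2"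
    by (simp add: dist_prod_def dist_real_def)
  also have "\<dots> = a^2*(X2-X1)^2+b^2*(Y2-Y1)^2" unfolding P by algebra
  also have "\<dots> = (1 - X1*X2 - Y1*Y2)*(a^2+b^2 - (a^2-b^2)*(X1*X2-Y1*Y2))" using u by algebra
  finally show ?thesis using assms(1,2) by (simp add: Wf_eq X1_Y1_X2_Y2_def[symmetric] Kc_def Cc_def)
qed



lemma cross_rot: "cross2 (R-Q) (P-Q) = cross2 (Q-P) (R-P)"
  unfolding cross2_def by (simp add: algebra_simps)

lemma nondeg_rot: "nondegenerate P Q R \<Longrightarrow> nondegenerate Q R P"
  by (simp add: nondegenerate_def cross_rot)

lemma nondeg_distinct: "nondegenerate P Q R \<Longrightarrow> P \<noteq> Q \<and> P \<noteq> R \<and> Q \<noteq> R"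
  by (auto simp: nondegenerate_def cross2_def)

lemma unit_w_pos:
  fixes X1 Y1 X2 Y2 :: real
  assumes "X1^2+Y1^2=1" "X2^2+Y2^2=1" "X1 \<noteq> X2 \<or> Y1 \<noteq> Y2"
  shows "1 - (X1*X2+Y1*Y2) > 0"
proof -
  have e: "1 - (X1*X2+Y1*Y2) = ((X1-X2)^2+(Y1-Y2)^2)/2" using assms(1,2) by algebra
  have "(X1-X2)^2+(Y1-Y2)^2 > 0" using assms(3) by (auto simp: sum_power2_gt_zero_iff)
  thus ?thesis unfolding e by simp
qed

lemma zc_neq:
  fixes a b :: real and P Q :: pt
  assumes "a \<noteq> 0" "b \<noteq> 0" "P \<noteq> Q" shows "fst P/a \<noteq> fst Q/a \<or> snd P/b \<noteq> snd Q/b"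
proof (rule ccontr)
  assume "\<not> (fst P/a \<noteq> fst Q/a \<or> snd P/b \<noteq> snd Q/b)"
  hence h: "fst P/a = fst Q/a" "snd P/b = snd Q/b" by auto
  have "fst P = (fst P/a)*a" using assms(1) by simp
  also have "\<dots> = fst Q" using assms(1) h(1) by simp
  finally have "fst P = fst Q" .
  moreover have "snd P = (snd P/b)*b" using assms(2) by simp
  moreover have "(snd P/b)*b = snd Q" using assms(2) h(2) by simp
  ultimately have "fst P = fst Q" "snd P = snd Q" by auto
  thus False using assms(3) by (simp add: prod_eq_iff)
qed

lemma periodic_rels:
  assumes ab: "a>b" "b>0" and per: "periodic3 a b P1 P2 P3"
  defines "z1 \<equiv> zc a b P1" and "z2 \<equiv> zc a b P2" and "z3 \<equiv> zc a b P3"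
  shows "z1\<noteq>z2" "z1\<noteq>z3" "z2\<noteq>z3"
    "z1*z2+z1*z3+z2*z3 = - of_real (rc a b)" "z1+z2+z3 = - of_real (rc a b) * (z1*z2*z3)"
proof -
  have a0: "a>0" and b0: "b>0" using ab by auto
  from per have E: "P1 \<in> ellipse_set a b" "P2 \<in> ellipse_set a b" "P3 \<in> ellipse_set a b"
    and nd: "nondegenerate P1 P2 P3"
    and bis: "normal_bisects a b P1 P2 P3" "normal_bisects a b P2 P3 P1" "normal_bisects a b P3 P1 P2"
    by (auto simp: periodic3_def)
  have nd2: "nondegenerate P2 P3 P1" using nd by (rule nondeg_rot)
  have nd3: "nondegenerate P3 P1 P2" using nd2 by (rule nondeg_rot)
  have V1: "Wf a b P1 P2 * dist P3 P1 = Wf a b P1 P3 * dist P2 P1" by (rule vertex_fwd[OF a0 b0 E(1) nd bis(1)])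
  have V2: "Wf a b P2 P3 * dist P1 P2 = Wf a b P2 P1 * dist P3 P2" by (rule vertex_fwd[OF a0 b0 E(2) nd2 bis(2)])
  have dP: "P1 \<noteq> P2" "P1 \<noteq> P3" "P2 \<noteq> P3" using nondeg_distinct[OF nd] by auto
  define X1 Y1 X2 Y2 X3 Y3 where "X1 = fst P1/a" "Y1 = snd P1/b" "X2 = fst P2/a" "Y2 = snd P2/b"
    "X3 = fst P3/a" "Y3 = snd P3/b"
  note XY = X1_Y1_X2_Y2_X3_Y3_def
  have u: "X1^2+Y1^2=1" "X2^2+Y2^2=1" "X3^2+Y3^2=1"
    using zc_unit[OF a0 b0 E(1)] zc_unit[OF a0 b0 E(2)] zc_unit[OF a0 b0 E(3)] by (simp_all add: XY)
  have z: "z1 = Complex X1 Y1" "z2 = Complex X2 Y2" "z3 = Complex X3 Y3" by (simp_all add: z1_def z2_def z3_def zc_eq XY)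
  show "z1\<noteq>z2" "z1\<noteq>z3" "z2\<noteq>z3" using dP zc_inj[of a b P1 P2] zc_inj[of a b P1 P3] zc_inj[of a b P2 P3] a0 b0 by (auto simp: z1_def z2_def z3_def)
  define w12 w13 w23 where "w12 = 1 - (X1*X2+Y1*Y2)" "w13 = 1 - (X1*X3+Y1*Y3)" "w23 = 1 - (X2*X3+Y2*Y3)"
  note wd = w12_w13_w23_def
  have W: "Wf a b P1 P2 = w12" "Wf a b P2 P1 = w12" "Wf a b P1 P3 = w13" "Wf a b P2 P3 = w23"
    using a0 b0 by (simp_all add: Wf_eq wd XY algebra_simps)
  have n12: "X1 \<noteq> X2 \<or> Y1 \<noteq> Y2" using zc_neq[of a b P1 P2] dP a0 b0 by (simp add: XY)
  have n13: "X1 \<noteq> X3 \<or> Y1 \<noteq> Y3" using zc_neq[of a b P1 P3] dP a0 b0 by (simp add: XY)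
  have n23: "X2 \<noteq> X3 \<or> Y2 \<noteq> Y3" using zc_neq[of a b P2 P3] dP a0 b0 by (simp add: XY)
  have wp: "w12 > 0" "w13 > 0" "w23 > 0"
    using unit_w_pos[OF u(1) u(2) n12] unit_w_pos[OF u(1) u(3) n13] unit_w_pos[OF u(2) u(3) n23]
    by (simp_all add: wd)
  define s1 s2 s3 where "s1 = dist P2 P3" "s2 = dist P1 P3" "s3 = dist P1 P2"
  note sd = s1_s2_s3_def
  have sp: "s1 > 0" "s2 > 0" "s3 > 0" using dP by (simp_all add: sd)
  have V1': "w12 * s2 = w13 * s3" using V1 W by (simp add: sd dist_commute)
  have V2': "w23 * s3 = w12 * s1" using V2 W by (simp add: sd dist_commute)
  define L12 L13 L23 where "L12 = Kc a b - Cc a b*(X1*X2-Y1*Y2)" "L13 = Kc a b - Cc a b*(X1*X3-Y1*Y3)"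
    "L23 = Kc a b - Cc a b*(X2*X3-Y2*Y3)"
  note Ld = L12_L13_L23_def
  have D: "s3^2 = w12*L12" "s2^2 = w13*L13" "s1^2 = w23*L23"
    using dist_eq[OF a0 b0 E(1) E(2)] dist_eq[OF a0 b0 E(1) E(3)] dist_eq[OF a0 b0 E(2) E(3)] W
    by (simp_all add: sd Ld XY)
  define M' where "M' = s3^2/w12^2"
  have Mp: "M' > 0" using sp wp by (simp add: M'_def)
  have r12: "L12 = M'*w12" using D(1) wp by (simp add: M'_def field_simps power2_eq_square)
  have s2e: "s2 = w13* s3/w12" using V1' wp by (simp add: field_simps)
  have s1e: "s1 = w23* s3/w12" using V2' wp by (simp add: field_simps)
  have r13: "L13 = M'*w13"
  proof -
    have "w13*L13 = w13*(M'*w13)" using D(2) s2e wp by (simp add: M'_def field_simps power2_eq_square)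
    thus ?thesis using wp by simp
  qed
  have r23: "L23 = M'*w23"
  proof -
    have "w23*L23 = w23*(M'*w23)" using D(3) s1e wp by (simp add: M'_def field_simps power2_eq_square)
    thus ?thesis using wp by simp
  qed
  let ?C = "complex_of_real (Cc a b)" and ?K = "complex_of_real (Kc a b)" and ?M = "complex_of_real M'"
  have R12: "?C*(z1^2*z2^2+1) - ?M*(z1^2+z2^2) = 2*(?K-?M)*z1*z2"
    unfolding z by (rule pairR_fwd[OF u(1) u(2)]) (use r12 in \<open>simp add: Ld wd algebra_simps\<close>)
  have R13: "?C*(z1^2*z3^2+1) - ?M*(z1^2+z3^2) = 2*(?K-?M)*z1*z3"
    unfolding z by (rule pairR_fwd[OF u(1) u(3)]) (use r13 in \<open>simp add: Ld wd algebra_simps\<close>)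
  have R23: "?C*(z2^2*z3^2+1) - ?M*(z2^2+z3^2) = 2*(?K-?M)*z2*z3"
    unfolding z by (rule pairR_fwd[OF u(2) u(3)]) (use r23 in \<open>simp add: Ld wd algebra_simps\<close>)
  have dz: "z1\<noteq>z2" "z1\<noteq>z3" "z2\<noteq>z3" using dP zc_inj[of a b P1 P2] zc_inj[of a b P1 P3] zc_inj[of a b P2 P3] a0 b0 by (auto simp: z1_def z2_def z3_def)
  note RR = rels_from_pairs[OF dz R12 R13 R23]
  have "?M*(2*?K-3*?M) = ?M*(?C*(z1*z2+z1*z3+z2*z3))" using RR(2) by simp
  also have "\<dots> = ?C*(?M*(z1*z2+z1*z3+z2*z3))" by simp
  also have "\<dots> = - ?C * ?C" using RR(1) by simp
  finally have "complex_of_real (M'*(2*Kc a b-3*M') + (Cc a b)^2) = 0" by (simp add: power2_eq_square algebra_simps)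
  hence q: "M'*(2*Kc a b-3*M') + (Cc a b)^2 = 0" by (metis of_real_eq_0_iff)
  note cf = cfacts[OF ab]
  have "(M' - Mc a b)*(3*(M'+Mc a b) - 2*Kc a b) = 0" using q cf(9) by algebra
  moreover have "3*(M'+Mc a b) - 2*Kc a b > 0" using Mp cf(6) unfolding Mc_def by (simp add: field_simps)
  ultimately have MM: "M' = Mc a b" by simp
  have Mn: "?M \<noteq> 0" using Mp by simp
  have "z1*z2+z1*z3+z2*z3 = - ?C / ?M" using RR(1) Mn by (simp add: field_simps)
  thus "z1*z2+z1*z3+z2*z3 = - of_real (rc a b)" by (simp add: rc_def MM)
  have "?M*(z1+z2+z3) = - (?C*(z1*z2*z3))" using RR(3) by algebra
  hence "z1+z2+z3 = - (?C / ?M) * (z1*z2*z3)" using Mn by (simp add: field_simps)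
  thus "z1+z2+z3 = - of_real (rc a b) * (z1*z2*z3)" by (simp add: rc_def MM)
qed



lemma aux_ratio:
  fixes q :: complex assumes "q \<noteq> 1" "3+q \<noteq> 0" shows "(8/(1-q))/(2*(3+q)/(1-q)) = 4/(3+q)"
proof -
  have g: "\<And>m p::complex. m \<noteq> 0 \<Longrightarrow> p \<noteq> 0 \<Longrightarrow> (8/m)/(2*p/m) = 4/p"
    by (simp add: field_simps)
  have "1-q \<noteq> 0" using assms by simp
  thus ?thesis using g assms(2) by blast
qed

lemma core_centers:
  fixes z1 z2 z3 :: complex and r :: real
  assumes nz: "z1\<noteq>0" "z2\<noteq>0" "z3\<noteq>0" and dz: "z1\<noteq>z2" "z1\<noteq>z3" "z2\<noteq>z3"
    and r: "0<r" "r<1"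
    and rel2: "z1*z2+z1*z3+z2*z3 = - of_real r" and rel1: "z1+z2+z3 = - of_real r * (z1*z2*z3)"
  defines "wc12 \<equiv> 1 - (z1/z2+z2/z1)/2" and "wc13 \<equiv> 1 - (z1/z3+z3/z1)/2" and "wc23 \<equiv> 1 - (z2/z3+z3/z2)/2"
  defines "uc1 \<equiv> wc12+wc13-wc23" and "uc2 \<equiv> wc12+wc23-wc13" and "uc3 \<equiv> wc13+wc23-wc12"
  shows "1/uc1+1/uc2+1/uc3 \<noteq> 0"
    "(z1/uc1+z2/uc2+z3/uc3)/(1/uc1+1/uc2+1/uc3) = z1+z2+z3"
    "(wc23/uc1*z1 + wc13/uc2*z2 + wc12/uc3*z3)/(wc23/uc1+wc13/uc2+wc12/uc3) = of_real (4/(3+r^2)) * (z1+z2+z3)"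
proof -
  define e1 e2 e3 where "e1 = z1+z2+z3" "e2 = z1*z2+z1*z3+z2*z3" "e3 = z1*z2*z3"
  note ed = e1_e2_e3_def
  have e3n: "e3 \<noteq> 0" using nz by (simp add: ed)
  have r2: "(of_real r::complex)^2 \<noteq> 1"
  proof
    assume "(of_real r::complex)^2 = 1"
    hence "r^2 = 1" by (metis of_real_eq_1_iff of_real_power)
    moreover have "r*r < 1*1" using r by (intro mult_strict_mono) auto
    ultimately show False by (simp add: power2_eq_square)
  qed
  have prod: "(z1+z2)*(z1+z3)*(z2+z3) = ((of_real r)^2 - 1)*e3"
  proof -
    have "(z1+z2)*(z1+z3)*(z2+z3) = e1*e2 - e3" by (simp add: ed; algebra)
    also have "\<dots> = ((of_real r)^2 - 1)*e3" using rel1 rel2 by (simp add: ed power2_eq_square algebra_simps)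
    finally show ?thesis .
  qed
  have prodn: "(z1+z2)*(z1+z3)*(z2+z3) \<noteq> 0" using prod e3n r2 by simp
  hence s: "z1+z2\<noteq>0" "z1+z3\<noteq>0" "z2+z3\<noteq>0" by auto
  note SI = sum_ids[OF dz s]
  define D1 D2 D3 where "D1 = (z1-z2)*(z1-z3)*(z2+z3)" "D2 = (z2-z1)*(z2-z3)*(z1+z3)" "D3 = (z3-z1)*(z3-z2)*(z1+z2)"
  note Dd = D1_D2_D3_def
  have Dn: "D1 \<noteq> 0" "D2 \<noteq> 0" "D3 \<noteq> 0" using dz s by (auto simp: Dd)
  have u1: "uc1 = - D1/(2*e3)" unfolding uc1_def wc12_def wc13_def wc23_def Dd ed
    by (rule uc_formula[OF nz])
  have u2: "uc2 = - D2/(2*e3)"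
  proof -
    have "uc2 = (1 - (z2/z1+z1/z2)/2) + (1 - (z2/z3+z3/z2)/2) - (1 - (z1/z3+z3/z1)/2)"
      unfolding uc2_def wc12_def wc13_def wc23_def by (simp add: add.commute)
    also have "\<dots> = - ((z2-z1)*(z2-z3)*(z1+z3))/(2*(z2*z1*z3))" by (rule uc_formula[OF nz(2,1,3)])
    finally have c: "uc2 = - ((z2-z1)*(z2-z3)*(z1+z3))/(2*(z2*z1*z3))" .
    have e: "z2*z1*z3 = e3" by (simp add: ed mult_ac)
    show ?thesis unfolding Dd by (rule c[unfolded e])
  qed
  have u3: "uc3 = - D3/(2*e3)"
  proof -
    have "uc3 = (1 - (z3/z1+z1/z3)/2) + (1 - (z3/z2+z2/z3)/2) - (1 - (z1/z2+z2/z1)/2)"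
      unfolding uc3_def wc12_def wc13_def wc23_def by (simp add: add.commute)
    also have "\<dots> = - ((z3-z1)*(z3-z2)*(z1+z2))/(2*(z3*z1*z2))" by (rule uc_formula[OF nz(3,1,2)])
    finally have c: "uc3 = - ((z3-z1)*(z3-z2)*(z1+z2))/(2*(z3*z1*z2))" .
    have e: "z3*z1*z2 = e3" by (simp add: ed mult_ac)
    show ?thesis unfolding Dd by (rule c[unfolded e])
  qed
  have iu: "\<And>x. x/uc1 = -2*e3*(x/D1)" "\<And>x. x/uc2 = -2*e3*(x/D2)" "\<And>x. x/uc3 = -2*e3*(x/D3)"
    using Dn e3n by (simp_all add: u1 u2 u3 field_simps)
  define S0 where "S0 = 1/uc1+1/uc2+1/uc3"
  define S1 where "S1 = z1/uc1+z2/uc2+z3/uc3"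
  have S0e: "S0 = -2*e3/((z1+z2)*(z1+z3)*(z2+z3))"
  proof -
    have "S0 = -2*e3*(1/D1+1/D2+1/D3)" unfolding S0_def iu by (simp add: algebra_simps)
    also have "1/D1+1/D2+1/D3 = 1/((z1+z2)*(z1+z3)*(z2+z3))" unfolding Dd by (rule SI(2))
    finally show ?thesis by simp
  qed
  have S0v: "S0 = 2/(1-(of_real r)^2)"
    unfolding S0e prod using e3n r2 by (simp add: field_simps)
  have S0n: "S0 \<noteq> 0" unfolding S0v using r2 by simp
  thus "1/uc1+1/uc2+1/uc3 \<noteq> 0" unfolding S0_def .
  have S1e: "S1 = e1*S0"
  proof -
    have "S1 = -2*e3*(z1/D1+z2/D2+z3/D3)" unfolding S1_def iu by (simp add: algebra_simps)
    also have "z1/D1+z2/D2+z3/D3 = e1*(1/D1+1/D2+1/D3)" unfolding Dd ed by (rule SI(1))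
    also have "-2*e3*(e1*(1/D1+1/D2+1/D3)) = e1*(-2*e3*(1/D1+1/D2+1/D3))" by simp
    also have "-2*e3*(1/D1+1/D2+1/D3) = S0" unfolding S0_def iu by (simp add: algebra_simps)
    finally show ?thesis .
  qed
  show "(z1/uc1+z2/uc2+z3/uc3)/(1/uc1+1/uc2+1/uc3) = z1+z2+z3"
    using S1e S0n unfolding S0_def[symmetric] S1_def[symmetric] by (simp add: ed)
  define T where "T = wc12+wc13+wc23"
  have Te: "T = 3 - (e1*e2/e3 - 3)/2" unfolding T_def wc12_def wc13_def wc23_def ed
    using nz by (simp add: field_simps; algebra)
  have e12: "e1*e2/e3 = (of_real r)^2" using rel1 rel2 e3n by (simp add: ed power2_eq_square field_simps)
  have Tv: "T = (9 - (of_real r)^2)/2" unfolding Te e12 by (simp add: field_simps)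
  have w23: "wc23 = (T - uc1)/2" and w13: "wc13 = (T - uc2)/2" and w12: "wc12 = (T - uc3)/2"
    unfolding T_def uc1_def uc2_def uc3_def by (simp_all add: field_simps)
  have un: "uc1 \<noteq> 0" "uc2 \<noteq> 0" "uc3 \<noteq> 0" using Dn e3n by (simp_all add: u1 u2 u3)
  have N: "wc23/uc1*z1 + wc13/uc2*z2 + wc12/uc3*z3 = (T*S1 - e1)/2"
    unfolding w23 w13 w12 S1_def ed using un by (simp add: field_simps)
  have Dm: "wc23/uc1+wc13/uc2+wc12/uc3 = (T*S0 - 3)/2"
    unfolding w23 w13 w12 S0_def using un by (simp add: field_simps)
  have r3: "3 + (of_real r::complex)^2 \<noteq> 0"
  proof
    assume "3 + (of_real r::complex)^2 = 0"
    hence "of_real (3 + r^2) = (0::complex)" by simp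
    hence "3 + r^2 = 0" by (metis of_real_eq_0_iff)
    thus False by (smt (verit) zero_le_power2)
  qed
  have r1: "1 - (of_real r::complex)^2 \<noteq> 0" using r2 by simp
  have TS: "T*S0 - 3 = 2*(3 + (of_real r)^2)/(1 - (of_real r)^2)"
    unfolding Tv S0v using r1 by (simp add: field_simps; algebra)
  have "2*(3 + (of_real r::complex)^2) \<noteq> 0" using r3 by (metis mult_eq_0_iff zero_neq_numeral)
  hence TSn: "T*S0 - 3 \<noteq> 0" unfolding TS using r1 by simp
  have "(T*S1 - e1)/2 / ((T*S0 - 3)/2) = e1 * ((T*S0 - 1)/(T*S0-3))" unfolding S1e
    using TSn by (simp add: field_simps)
  also have "(T*S0 - 1)/(T*S0-3) = 4/(3+(of_real r)^2)"
  proof -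
    have TS1: "T*S0 - 1 = 8/(1 - (of_real r)^2)"
      unfolding Tv S0v using r1 by (simp add: field_simps; algebra)
    show ?thesis unfolding TS1 TS using r2 r3 by (rule aux_ratio)
  qed
  finally show "(wc23/uc1*z1 + wc13/uc2*z2 + wc12/uc3*z3)/(wc23/uc1+wc13/uc2+wc12/uc3) = of_real (4/(3+r^2)) * (z1+z2+z3)"
    unfolding N Dm by (simp add: ed mult.commute)
qed



lemma unit_div:
  fixes X1 Y1 X2 Y2 :: real
  assumes "X2^2+Y2^2=1"
  shows "Complex X1 Y1 / Complex X2 Y2 = Complex (X1*X2+Y1*Y2) (Y1*X2-X1*Y2)"
  using assms by (simp add: complex_eq_iff Re_divide Im_divide power2_eq_square)

lemma Wf_sym: "Wf a b P Q = Wf a b Q P"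
  by (simp add: Wf_def mult.commute)

lemma Wf_c:
  assumes "a>0" "b>0" "P \<in> ellipse_set a b" "Q \<in> ellipse_set a b"
  shows "complex_of_real (Wf a b P Q) = 1 - (zc a b P/zc a b Q + zc a b Q/zc a b P)/2"
proof -
  define X1 Y1 X2 Y2 where "X1 = fst P/a" "Y1 = snd P/b" "X2 = fst Q/a" "Y2 = snd Q/b"
  have u: "X1^2+Y1^2=1" "X2^2+Y2^2=1" using zc_unit[OF assms(1,2,3)] zc_unit[OF assms(1,2,4)]
    by (simp_all add: X1_Y1_X2_Y2_def)
  have W: "Wf a b P Q = 1 - (X1*X2+Y1*Y2)" using assms(1,2) by (simp add: Wf_eq X1_Y1_X2_Y2_def)
  have z: "zc a b P = Complex X1 Y1" "zc a b Q = Complex X2 Y2" by (simp_all add: zc_eq X1_Y1_X2_Y2_def)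
  show ?thesis unfolding W z unit_div[OF u(2)] unit_div[OF u(1)]
    by (simp add: complex_eq_iff algebra_simps)
qed

lemma Wf_nonneg:
  assumes "a>0" "b>0" "P \<in> ellipse_set a b" "Q \<in> ellipse_set a b"
  shows "Wf a b P Q \<ge> 0"
proof -
  define X1 Y1 X2 Y2 where "X1 = fst P/a" "Y1 = snd P/b" "X2 = fst Q/a" "Y2 = snd Q/b"
  have u: "X1^2+Y1^2=1" "X2^2+Y2^2=1" using zc_unit[OF assms(1,2,3)] zc_unit[OF assms(1,2,4)]
    by (simp_all add: X1_Y1_X2_Y2_def)
  have W: "Wf a b P Q = 1 - (X1*X2+Y1*Y2)" using assms(1,2) by (simp add: Wf_eq X1_Y1_X2_Y2_def)
  have e: "1 - (X1*X2+Y1*Y2) = ((X1-X2)^2+(Y1-Y2)^2)/2" using u by algebra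
  show ?thesis unfolding W e by simp
qed

lemma pair_dist:
  assumes ab: "a>b" "b>0" and E: "P \<in> ellipse_set a b" "Q \<in> ellipse_set a b"
  and R: "of_real (rc a b)*((zc a b P)^2*(zc a b Q)^2+1) - ((zc a b P)^2+(zc a b Q)^2) - (1-(of_real (rc a b))^2)*zc a b P*zc a b Q = 0"
  shows "dist P Q = sqrt (Mc a b) * Wf a b P Q"
proof -
  have a0: "a>0" and b0: "b>0" using ab by auto
  define X1 Y1 X2 Y2 where "X1 = fst P/a" "Y1 = snd P/b" "X2 = fst Q/a" "Y2 = snd Q/b"
  have u: "X1^2+Y1^2=1" "X2^2+Y2^2=1" using zc_unit[OF a0 b0 E(1)] zc_unit[OF a0 b0 E(2)]
    by (simp_all add: X1_Y1_X2_Y2_def)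
  have W: "Wf a b P Q = 1 - (X1*X2+Y1*Y2)" using a0 b0 by (simp add: Wf_eq X1_Y1_X2_Y2_def)
  have z: "zc a b P = Complex X1 Y1" "zc a b Q = Complex X2 Y2" by (simp_all add: zc_eq X1_Y1_X2_Y2_def)
  have rel: "rc a b*(X1*X2-Y1*Y2) - (X1*X2+Y1*Y2) = (1-(rc a b)^2)/2"
    by (rule pairR_bwd[OF u]) (use R in \<open>simp add: z\<close>)
  note cf = cfacts[OF ab]
  have L: "Kc a b - Cc a b*(X1*X2-Y1*Y2) = Mc a b * Wf a b P Q"
  proof -
    have "Kc a b - Cc a b*(X1*X2-Y1*Y2) = Mc a b*((3-(rc a b)^2)/2 - rc a b*(X1*X2-Y1*Y2))"
      by (subst cf(10), subst cf(11)) (simp add: algebra_simps)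
    also have "\<dots> = Mc a b * Wf a b P Q" unfolding W using rel by algebra
    finally show ?thesis .
  qed
  have "(dist P Q)^2 = Wf a b P Q * (Kc a b - Cc a b*((fst P/a)*(fst Q/a) - (snd P/b)*(snd Q/b)))"
    by (rule dist_eq[OF a0 b0 E])
  also have "\<dots> = Mc a b * (Wf a b P Q)^2" using L by (simp add: X1_Y1_X2_Y2_def[symmetric] power2_eq_square)
  finally have d2: "(dist P Q)^2 = Mc a b * (Wf a b P Q)^2" .
  have "dist P Q = sqrt ((dist P Q)^2)" by simp
  also have "\<dots> = sqrt (Mc a b) * Wf a b P Q"
    unfolding d2 using Wf_nonneg[OF a0 b0 E] by (simp add: real_sqrt_mult)
  finally show ?thesis .
qed

lemma rel_pairs:
  fixes z1 z2 z3 r :: complex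
  assumes "z1*z2+z1*z3+z2*z3 = -r" "z1+z2+z3 = -r*(z1*z2*z3)"
  shows "r*(z1^2*z2^2+1) - (z1^2+z2^2) - (1-r^2)*z1*z2 = 0"
    "r*(z1^2*z3^2+1) - (z1^2+z3^2) - (1-r^2)*z1*z3 = 0"
    "r*(z2^2*z3^2+1) - (z2^2+z3^2) - (1-r^2)*z2*z3 = 0"
proof -
  show "r*(z1^2*z2^2+1) - (z1^2+z2^2) - (1-r^2)*z1*z2 = 0" by (rule vieta_R[OF assms])
  show "r*(z1^2*z3^2+1) - (z1^2+z3^2) - (1-r^2)*z1*z3 = 0"
    by (rule vieta_R[of z1 z3 z2 r]) (use assms in \<open>simp_all add: ac_simps\<close>)
  show "r*(z2^2*z3^2+1) - (z2^2+z3^2) - (1-r^2)*z2*z3 = 0"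
    by (rule vieta_R[of z2 z3 z1 r]) (use assms in \<open>simp_all add: ac_simps\<close>)
qed

lemma zc_wavg:
  "zc a b ((1/(A+B+C)) *\<^sub>R (A *\<^sub>R P1 + B *\<^sub>R P2 + C *\<^sub>R P3))
   = (of_real A * zc a b P1 + of_real B * zc a b P2 + of_real C * zc a b P3)/(of_real A + of_real B + of_real C)"
  by (simp add: zc_add zc_scale divide_inverse mult.commute)



lemma TC:
  "zc a b (tri_center h P1 P2 P3) =
   (let s1 = dist P2 P3; s2 = dist P3 P1; s3 = dist P1 P2 in
    (of_real (h s1 s2 s3 * s1) * zc a b P1 + of_real (h s2 s3 s1 * s2) * zc a b P2 + of_real (h s3 s1 s2 * s3) * zc a b P3)
    / (of_real (h s1 s2 s3 * s1) + of_real (h s2 s3 s1 * s2) + of_real (h s3 s1 s2 * s3)))"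
  unfolding tri_center_def Let_def by (rule zc_wavg)

lemma cancel_avg:
  fixes k x1 x2 x3 y1 y2 y3 :: complex
  assumes "k \<noteq> 0"
  shows "(k*x1*z1 + k*x2*z2 + k*x3*z3)/(k*x1+k*x2+k*x3) = (x1*z1+x2*z2+x3*z3)/(x1+x2+x3)"
proof -
  have "k*x1*z1 + k*x2*z2 + k*x3*z3 = k*(x1*z1+x2*z2+x3*z3)" "k*x1+k*x2+k*x3 = k*(x1+x2+x3)"
    by (simp_all add: algebra_simps)
  thus ?thesis using assms by simp
qed

lemma centers:
  assumes ab: "a>b" "b>0" and E: "P1 \<in> ellipse_set a b" "P2 \<in> ellipse_set a b" "P3 \<in> ellipse_set a b"
  and dz: "zc a b P1 \<noteq> zc a b P2" "zc a b P1 \<noteq> zc a b P3" "zc a b P2 \<noteq> zc a b P3"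
  and rel2: "zc a b P1*zc a b P2+zc a b P1*zc a b P3+zc a b P2*zc a b P3 = - of_real (rc a b)"
  and rel1: "zc a b P1+zc a b P2+zc a b P3 = - of_real (rc a b) * (zc a b P1*zc a b P2*zc a b P3)"
  shows "zc a b (tri_center (\<lambda>s1 s2 s3. 1/s1) P1 P2 P3) = (zc a b P1+zc a b P2+zc a b P3)/3"
   "zc a b (tri_center (\<lambda>s1 s2 s3. 1/(s1*(s2+s3-s1))) P1 P2 P3) = zc a b P1+zc a b P2+zc a b P3"
   "zc a b (tri_center (\<lambda>s1 s2 s3. 1/(s2+s3-s1)) P1 P2 P3) = of_real (Mc a b/dl a b) * (zc a b P1+zc a b P2+zc a b P3)"
proof -
  have a0: "a>0" and b0: "b>0" using ab by auto
  note cf = cfacts[OF ab]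
  define z1 z2 z3 where "z1 = zc a b P1" "z2 = zc a b P2" "z3 = zc a b P3"
  note zd = z1_z2_z3_def
  have dz': "z1\<noteq>z2" "z1\<noteq>z3" "z2\<noteq>z3" using dz by (simp_all add: zd)
  have rel2': "z1*z2+z1*z3+z2*z3 = - of_real (rc a b)" using rel2 by (simp add: zd)
  have rel1': "z1+z2+z3 = - of_real (rc a b) * (z1*z2*z3)" using rel1 by (simp add: zd)
  have nz: "z1\<noteq>0" "z2\<noteq>0" "z3\<noteq>0"
    using unit_nz[OF zc_unit[OF a0 b0 E(1)]] unit_nz[OF zc_unit[OF a0 b0 E(2)]] unit_nz[OF zc_unit[OF a0 b0 E(3)]]
    by (simp_all add: zd zc_eq)
  note rp = rel_pairs[OF rel2 rel1]
  define \<rho> where "\<rho> = sqrt (Mc a b)"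
  have \<rho>p: "\<rho> > 0" using cf(5) by (simp add: \<rho>_def)
  define w12 w13 w23 where "w12 = Wf a b P1 P2" "w13 = Wf a b P1 P3" "w23 = Wf a b P2 P3"
  note wd = w12_w13_w23_def
  have d12: "dist P1 P2 = \<rho> * w12" using pair_dist[OF ab E(1) E(2) rp(1)] by (simp add: \<rho>_def wd)
  have d13: "dist P3 P1 = \<rho> * w13" using pair_dist[OF ab E(1) E(3) rp(2)] by (simp add: \<rho>_def wd dist_commute)
  have d23: "dist P2 P3 = \<rho> * w23" using pair_dist[OF ab E(2) E(3) rp(3)] by (simp add: \<rho>_def wd)
  have Pd: "P1 \<noteq> P2" "P1 \<noteq> P3" "P2 \<noteq> P3" using dz by auto
  have sp: "\<rho> * w12 > 0" "\<rho> * w13 > 0" "\<rho> * w23 > 0"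
    using Pd d12 d13 d23 by (metis dist_pos_lt dist_commute)+
  define wc12 wc13 wc23 where "wc12 = 1 - (z1/z2+z2/z1)/2" "wc13 = 1 - (z1/z3+z3/z1)/2" "wc23 = 1 - (z2/z3+z3/z2)/2"
  have wc: "of_real w12 = wc12" "of_real w13 = wc13" "of_real w23 = wc23"
    using Wf_c[OF a0 b0 E(1) E(2)] Wf_c[OF a0 b0 E(1) E(3)] Wf_c[OF a0 b0 E(2) E(3)]
    by (simp_all add: wd wc12_wc13_wc23_def zd)
  define uc1 uc2 uc3 where "uc1 = wc12+wc13-wc23" "uc2 = wc12+wc23-wc13" "uc3 = wc13+wc23-wc12"
  note CC = core_centers[OF nz dz' cf(7) cf(8) rel2' rel1', folded wc12_wc13_wc23_def, folded uc1_uc2_uc3_def]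
  have uc: "of_real (w12+w13-w23) = uc1" "of_real (w12+w23-w13) = uc2" "of_real (w13+w23-w12) = uc3"
    by (simp_all add: uc1_uc2_uc3_def wc[symmetric])
  let ?T = "\<lambda>h. zc a b (tri_center h P1 P2 P3)"
  have TCs: "\<And>h. ?T h = (of_real (h (\<rho>*w23) (\<rho>*w13) (\<rho>*w12) * (\<rho>*w23)) * z1 + of_real (h (\<rho>*w13) (\<rho>*w12) (\<rho>*w23) * (\<rho>*w13)) * z2
      + of_real (h (\<rho>*w12) (\<rho>*w23) (\<rho>*w13) * (\<rho>*w12)) * z3)
    / (of_real (h (\<rho>*w23) (\<rho>*w13) (\<rho>*w12) * (\<rho>*w23)) + of_real (h (\<rho>*w13) (\<rho>*w12) (\<rho>*w23) * (\<rho>*w13))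
      + of_real (h (\<rho>*w12) (\<rho>*w23) (\<rho>*w13) * (\<rho>*w12)))"
    unfolding TC Let_def d12 d13 d23 zd ..
  show "zc a b (tri_center (\<lambda>s1 s2 s3. 1/s1) P1 P2 P3) = (zc a b P1+zc a b P2+zc a b P3)/3"
  proof -
    have o: "1/(\<rho>*w23)*(\<rho>*w23) = 1" "1/(\<rho>*w13)*(\<rho>*w13) = 1" "1/(\<rho>*w12)*(\<rho>*w12) = 1"
      using sp \<rho>p by (auto simp: field_simps)
    show ?thesis unfolding TCs o by (simp add: zd[symmetric])
  qed
  show "zc a b (tri_center (\<lambda>s1 s2 s3. 1/(s1*(s2+s3-s1))) P1 P2 P3) = zc a b P1+zc a b P2+zc a b P3"
  proof -
    have k: "complex_of_real (1/\<rho>) \<noteq> 0" using \<rho>p by simp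
    have g: "\<And>x y u::real. x \<noteq> 0 \<Longrightarrow> y = \<rho>*u \<Longrightarrow> 1/(x*y)*x = (1/\<rho>)*(1/u)"
      by (simp add: divide_inverse inverse_mult_distrib)
    have xn: "\<rho>*w23 \<noteq> 0" "\<rho>*w13 \<noteq> 0" "\<rho>*w12 \<noteq> 0" using sp by linarith+
    have w1: "1/(\<rho>*w23*(\<rho>*w13+\<rho>*w12-\<rho>*w23))*(\<rho>*w23) = (1/\<rho>)*(1/(w12+w13-w23))"
      by (rule g[OF xn(1)]) (simp add: algebra_simps)
    have w2: "1/(\<rho>*w13*(\<rho>*w12+\<rho>*w23-\<rho>*w13))*(\<rho>*w13) = (1/\<rho>)*(1/(w12+w23-w13))"
      by (rule g[OF xn(2)]) (simp add: algebra_simps)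
    have w3: "1/(\<rho>*w12*(\<rho>*w23+\<rho>*w13-\<rho>*w12))*(\<rho>*w12) = (1/\<rho>)*(1/(w13+w23-w12))"
      by (rule g[OF xn(3)]) (simp add: algebra_simps)
    have "?T (\<lambda>s1 s2 s3. 1/(s1*(s2+s3-s1))) = (z1/uc1+z2/uc2+z3/uc3)/(1/uc1+1/uc2+1/uc3)"
      unfolding TCs w1 w2 w3 of_real_mult uc[symmetric]
      using cancel_avg[OF k, of "1/of_real (w12+w13-w23)" z1 "1/of_real (w12+w23-w13)" z2 "1/of_real (w13+w23-w12)" z3]
      by simp
    also have "\<dots> = z1+z2+z3" by (rule CC(2))
    finally show ?thesis by (simp add: zd)
  qed
  show "zc a b (tri_center (\<lambda>s1 s2 s3. 1/(s2+s3-s1)) P1 P2 P3) = of_real (Mc a b/dl a b) * (zc a b P1+zc a b P2+zc a b P3)"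
  proof -
    have g2: "\<And>y u w::real. y = \<rho>*u \<Longrightarrow> 1/y*(\<rho>*w) = w/u" using \<rho>p by simp
    have w1: "1/(\<rho>*w13+\<rho>*w12-\<rho>*w23)*(\<rho>*w23) = w23/(w12+w13-w23)"
      by (rule g2) (simp add: algebra_simps)
    have w2: "1/(\<rho>*w12+\<rho>*w23-\<rho>*w13)*(\<rho>*w13) = w13/(w12+w23-w13)"
      by (rule g2) (simp add: algebra_simps)
    have w3: "1/(\<rho>*w23+\<rho>*w13-\<rho>*w12)*(\<rho>*w12) = w12/(w13+w23-w12)"
      by (rule g2) (simp add: algebra_simps)
    have "?T (\<lambda>s1 s2 s3. 1/(s2+s3-s1)) = (wc23/uc1*z1 + wc13/uc2*z2 + wc12/uc3*z3)/(wc23/uc1+wc13/uc2+wc12/uc3)"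
      unfolding TCs w1 w2 w3 of_real_divide uc wc by simp
    also have "\<dots> = of_real (4/(3+(rc a b)^2)) * (z1+z2+z3)" by (rule CC(3))
    finally show ?thesis by (simp add: zd cf(12))
  qed
qed



lemma cmod_key:
  fixes w :: complex and r :: real
  shows "(cmod (1 - of_real r*w))^2 - (cmod (w - of_real r))^2 = (1-r^2)*(1-(cmod w)^2)"
  by (simp only: cmod_power2) (simp add: power2_eq_square algebra_simps)

lemma unit_root:
  fixes z \<sigma> :: complex and r :: real
  assumes r: "0<r" "r<1" and s: "cmod \<sigma> = 1"
  and p: "z^3 + of_real r*\<sigma>*z^2 - of_real r*z - \<sigma> = 0"
  shows "cmod z = 1"
proof -
  define w where "w = z^2"
  have "z*(w - of_real r) = \<sigma>*(1 - of_real r*w)" using p unfolding w_def by algebra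
  hence eq: "cmod z * cmod (w - of_real r) = cmod (1 - of_real r*w)"
    by (metis norm_mult s mult_1)
  have cw: "cmod w = (cmod z)^2" by (simp add: w_def norm_power)
  have "r*r < 1*1" using r by (intro mult_strict_mono) auto
  hence r2: "1 - r^2 > 0" by (simp add: power2_eq_square)
  show ?thesis
  proof (rule ccontr)
    assume ne: "cmod z \<noteq> 1"
    show False
    proof (cases "cmod z < 1")
      case True
      hence "(cmod z)^2 < 1" by (simp add: power_less_one_iff abs_less_iff)
      hence "cmod w < 1" using cw by simp
      hence "(1-r^2)*(1-(cmod w)^2) > 0" using r2 by (simp add: power_less_one_iff)
      hence "(cmod (w - of_real r))^2 < (cmod (1 - of_real r*w))^2" using cmod_key[of r w] by simp
      hence lt: "cmod (w - of_real r) < cmod (1 - of_real r*w)" by (rule pos_sq_less) simp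
      have "cmod z * cmod (w - of_real r) \<le> cmod (w - of_real r)"
        using True by (simp add: mult_left_le_one_le)
      thus False using eq lt by simp
    next
      case False
      hence gt: "cmod z > 1" using ne by simp
      hence "(cmod z)^2 > 1" by (simp add: one_less_power)
      hence "cmod w > 1" using cw by simp
      hence "(cmod w)^2 > 1" by (simp add: one_less_power)
      hence "(1-r^2)*(1-(cmod w)^2) < 0" using r2 by (simp add: mult_pos_neg)
      hence "(cmod (1 - of_real r*w))^2 < (cmod (w - of_real r))^2" using cmod_key[of r w] by simp
      hence lt: "cmod (1 - of_real r*w) < cmod (w - of_real r)" by (rule pos_sq_less) simp
      hence pos: "cmod (w - of_real r) > 0" by (meson le_less_trans norm_ge_zero)
      have "cmod (w - of_real r) < cmod z * cmod (w - of_real r)" using gt pos by simp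
      thus False using eq lt by simp
    qed
  qed
qed

lemma exists_roots:
  fixes \<sigma> :: complex and r :: real
  assumes s: "\<sigma> \<noteq> 0"
  shows "\<exists>z1 z2 z3. z1*z2+z1*z3+z2*z3 = - of_real r \<and> z1+z2+z3 = - of_real r * \<sigma> \<and> z1*z2*z3 = \<sigma>"
proof -
  define p where "p = [:-\<sigma>, - of_real r, of_real r*\<sigma>, 1:]"
  have "\<not> (\<exists>a l. a \<noteq> 0 \<and> l = 0 \<and> p = pCons a l)" by (simp add: p_def)
  then obtain z1 where z1: "poly p z1 = 0" using fundamental_theorem_of_algebra_alt by blast
  hence pz: "z1^3 + of_real r*\<sigma>*z1^2 - of_real r*z1 - \<sigma> = 0"
    by (simp add: p_def algebra_simps power2_eq_square power3_eq_cube)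
  have z1n: "z1 \<noteq> 0" using pz s by auto
  define B where "B = of_real r*\<sigma> + z1"
  define c0 where "c0 = \<sigma>/z1"
  define sq where "sq = csqrt (B^2 - 4*c0)"
  define z2 where "z2 = (-B + sq)/2"
  define z3 where "z3 = (-B - sq)/2"
  have sum: "z2+z3 = -B" by (simp add: z2_def z3_def field_simps)
  have prd: "z2*z3 = c0"
  proof -
    have "z2*z3 = (B^2 - sq^2)/4" by (simp add: z2_def z3_def field_simps power2_eq_square; algebra)
    also have "sq^2 = B^2 - 4*c0" by (simp add: sq_def)
    finally show ?thesis by simp
  qed
  have "z1*z2+z1*z3+z2*z3 = z1*(z2+z3) + z2*z3" by (simp add: algebra_simps)
  also have "\<dots> = - z1*B + \<sigma>/z1" by (simp add: sum prd c0_def)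
  also have "\<dots> = - of_real r"
  proof -
    have "(- z1*B + \<sigma>/z1)*z1 = - of_real r * z1" using pz z1n unfolding B_def
      by (simp add: field_simps power2_eq_square power3_eq_cube; algebra)
    thus ?thesis using z1n by (metis mult_right_cancel)
  qed
  finally have e2: "z1*z2+z1*z3+z2*z3 = - of_real r" .
  have e1: "z1+z2+z3 = - of_real r * \<sigma>" using sum unfolding B_def by algebra
  have e3: "z1*z2*z3 = \<sigma>" using prd z1n by (simp add: c0_def mult.assoc)
  show ?thesis using e1 e2 e3 by blast
qed

lemma no_double:
  fixes z w \<sigma> :: complex and r :: real
  assumes r: "0<r" "r<1" and u: "cmod z = 1"
  and e2: "z*z+z*w+z*w = - of_real r" and e1: "z+z+w = - of_real r * \<sigma>" and e3: "z*z*w = \<sigma>"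
  shows False
proof -
  have p1: "3*z^2 + 2* of_real r*\<sigma>*z - of_real r = 0" using e1 e2 e3 by algebra
  have p0: "z^3 + of_real r*\<sigma>*z^2 - of_real r*z - \<sigma> = 0" using e1 e2 e3 by algebra
  have Q: "- of_real r*z^4 + (3 - (of_real r)^2)*z^2 - of_real r = 0"
  proof -
    have "- of_real r*z^4 + (3 - (of_real r)^2)*z^2 - of_real r
        = (1 - of_real r*z^2)*(3*z^2 + 2* of_real r*\<sigma>*z - of_real r) + 2* of_real r*z*(z^3 + of_real r*\<sigma>*z^2 - of_real r*z - \<sigma>)"
      by algebra
    thus ?thesis using p0 p1 by simp
  qed
  obtain X Y where z: "z = Complex X Y" by (cases z)
  have XY: "X^2+Y^2 = 1" using u by (simp add: z cmod_def)
  have "- of_real r*z^4 + (3 - (of_real r)^2)*z^2 - of_real r = z^2 * of_real (3 - r^2 - 2*r*(X^2-Y^2))"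
    using XY unfolding z by (simp add: complex_eq_iff power2_eq_square power4_eq_xxxx) algebra
  hence "z^2 * of_real (3 - r^2 - 2*r*(X^2-Y^2)) = 0" using Q by simp
  moreover have "z \<noteq> 0" using u by auto
  ultimately have "complex_of_real (3 - r^2 - 2*r*(X^2-Y^2)) = 0" by (metis mult_eq_0_iff power_not_zero)
  hence "3 - r^2 - 2*r*(X^2-Y^2) = 0" by (metis of_real_eq_0_iff)
  moreover have "X^2 - Y^2 \<le> 1" using XY by (smt (verit) zero_le_power2)
  hence "2*r*(X^2-Y^2) \<le> 2*r" using r by simp
  moreover have "3 - r^2 - 2*r > 0"
  proof -
    have "3 - r^2 - 2*r = (1-r)*(3+r)" by algebra
    thus ?thesis using r by simp
  qed
  ultimately show False by linarith
qed



lemma crossZ: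
  fixes X1 Y1 X2 Y2 X3 Y3 :: real
  assumes "X1^2+Y1^2=1" "X2^2+Y2^2=1" "X3^2+Y3^2=1"
  shows "2*\<i>* of_real((X2-X1)*(Y3-Y1) - (Y2-Y1)*(X3-X1))*(Complex X1 Y1*Complex X2 Y2*Complex X3 Y3)
     = (Complex X1 Y1 - Complex X2 Y2)*(Complex X3 Y3 - Complex X1 Y1)*(Complex X3 Y3 - Complex X2 Y2)"
  using assms by (simp add: complex_eq_iff algebra_simps power2_eq_square; algebra)

lemma cmod_unit_iff: "cmod z = 1 \<longleftrightarrow> (Re z)^2 + (Im z)^2 = 1"
  by (simp add: cmod_def)

lemma rels_periodic:
  assumes ab: "a>b" "b>0" and u: "cmod z1 = 1" "cmod z2 = 1" "cmod z3 = 1"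
  and dz: "z1\<noteq>z2" "z1\<noteq>z3" "z2\<noteq>z3"
  and rel2: "z1*z2+z1*z3+z2*z3 = - of_real (rc a b)"
  and rel1: "z1+z2+z3 = - of_real (rc a b) * (z1*z2*z3)"
  defines "P1 \<equiv> (a*Re z1, b*Im z1)" and "P2 \<equiv> (a*Re z2, b*Im z2)" and "P3 \<equiv> (a*Re z3, b*Im z3)"
  shows "periodic3 a b P1 P2 P3" "zc a b P1 = z1" "zc a b P2 = z2" "zc a b P3 = z3"
proof -
  have a0: "a>0" and b0: "b>0" using ab by auto
  show zz: "zc a b P1 = z1" "zc a b P2 = z2" "zc a b P3 = z3"
    using a0 b0 by (simp_all add: zc_def P1_def P2_def P3_def complex_eq_iff)
  have uu: "(Re z1)^2+(Im z1)^2 = 1" "(Re z2)^2+(Im z2)^2 = 1" "(Re z3)^2+(Im z3)^2 = 1"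
    using u by (simp_all add: cmod_unit_iff)
  have E: "P1 \<in> ellipse_set a b" "P2 \<in> ellipse_set a b" "P3 \<in> ellipse_set a b"
    using uu a0 b0 by (simp_all add: ellipse_set_def P1_def P2_def P3_def power_mult_distrib)
  have cz: "z1 = Complex (Re z1) (Im z1)" "z2 = Complex (Re z2) (Im z2)" "z3 = Complex (Re z3) (Im z3)" by simp_all
  define D where "D = (Re z2-Re z1)*(Im z3-Im z1) - (Im z2-Im z1)*(Re z3-Re z1)"
  have "2*\<i>* of_real D*(z1*z2*z3) = (z1 - z2)*(z3 - z1)*(z3 - z2)"
    using crossZ[OF uu] unfolding D_def by (simp only: cz[symmetric])
  moreover have "(z1 - z2)*(z3 - z1)*(z3 - z2) \<noteq> 0" using dz by auto
  ultimately have "D \<noteq> 0" by auto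
  moreover have "cross2 (P2 - P1) (P3 - P1) = a*b*D"
    by (simp add: cross2_def P1_def P2_def P3_def D_def algebra_simps)
  ultimately have nd: "nondegenerate P1 P2 P3"
    using a0 b0 by (simp add: nondegenerate_def)
  have nd2: "nondegenerate P2 P3 P1" using nd by (rule nondeg_rot)
  have nd3: "nondegenerate P3 P1 P2" using nd2 by (rule nondeg_rot)
  have rel2': "zc a b P1*zc a b P2+zc a b P1*zc a b P3+zc a b P2*zc a b P3 = - of_real (rc a b)"
    using rel2 zz by simp
  have rel1': "zc a b P1+zc a b P2+zc a b P3 = - of_real (rc a b) * (zc a b P1*zc a b P2*zc a b P3)"
    using rel1 zz by simp
  note rp = rel_pairs[OF rel2' rel1']
  have d12: "dist P1 P2 = sqrt (Mc a b) * Wf a b P1 P2" by (rule pair_dist[OF ab E(1) E(2) rp(1)])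
  have d13: "dist P1 P3 = sqrt (Mc a b) * Wf a b P1 P3" by (rule pair_dist[OF ab E(1) E(3) rp(2)])
  have d23: "dist P2 P3 = sqrt (Mc a b) * Wf a b P2 P3" by (rule pair_dist[OF ab E(2) E(3) rp(3)])
  have b1: "normal_bisects a b P1 P2 P3"
    by (rule vertex_bwd[OF a0 b0 E(1) nd]) (simp add: d12 d13 dist_commute)
  have b2: "normal_bisects a b P2 P3 P1"
    by (rule vertex_bwd[OF a0 b0 E(2) nd2]) (simp add: d12 d23 dist_commute Wf_sym[of a b P2 P1])
  have b3: "normal_bisects a b P3 P1 P2"
    by (rule vertex_bwd[OF a0 b0 E(3) nd3]) (simp add: d13 d23 dist_commute Wf_sym[of a b P3 P1] Wf_sym[of a b P3 P2])
  show "periodic3 a b P1 P2 P3" using nd E b1 b2 b3 by (simp add: periodic3_def)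
qed

lemma ell_iff:
  assumes "a>0" "b>0" "k>0"
  shows "X \<in> ellipse_set (k*a) (k*b) \<longleftrightarrow> cmod (zc a b X) = k"
proof -
  have "(fst X)^2/(k*a)^2 + (snd X)^2/(k*b)^2 = (cmod (zc a b X))^2 / k^2"
    using assms by (simp add: cmod_power2 zc_def power_divide power_mult_distrib field_simps)
  thus ?thesis using assms by (auto simp: ellipse_set_def)
qed

lemma cubic_of_rels:
  fixes z1 z2 z3 \<sigma> :: complex and r :: real
  assumes "z1*z2+z1*z3+z2*z3 = - of_real r" "z1+z2+z3 = - of_real r * \<sigma>" "z1*z2*z3 = \<sigma>"
  shows "z1^3 + of_real r*\<sigma>*z1^2 - of_real r*z1 - \<sigma> = 0"
  using assms by algebra

lemma locus:
  assumes ab: "a>b" "b>0" and c: "c > 0"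
  and HC: "\<And>P1 P2 P3. P1 \<in> ellipse_set a b \<Longrightarrow> P2 \<in> ellipse_set a b \<Longrightarrow> P3 \<in> ellipse_set a b \<Longrightarrow>
     zc a b P1 \<noteq> zc a b P2 \<Longrightarrow> zc a b P1 \<noteq> zc a b P3 \<Longrightarrow> zc a b P2 \<noteq> zc a b P3 \<Longrightarrow>
     zc a b P1*zc a b P2+zc a b P1*zc a b P3+zc a b P2*zc a b P3 = - of_real (rc a b) \<Longrightarrow>
     zc a b P1+zc a b P2+zc a b P3 = - of_real (rc a b) * (zc a b P1*zc a b P2*zc a b P3) \<Longrightarrow>
     zc a b (tri_center h P1 P2 P3) = of_real c * (zc a b P1+zc a b P2+zc a b P3)"
  shows "center_locus a b h = ellipse_set ((c*rc a b)*a) ((c*rc a b)*b)"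
proof -
  have a0: "a>0" and b0: "b>0" using ab by auto
  note cf = cfacts[OF ab]
  define k where "k = c*rc a b"
  have kp: "k > 0" using c cf(7) by (simp add: k_def)
  have unitP: "\<And>P. P \<in> ellipse_set a b \<Longrightarrow> cmod (zc a b P) = 1"
    using zc_unit[OF a0 b0] by (simp add: cmod_unit_iff zc_def)
  show ?thesis unfolding k_def[symmetric]
  proof
    show "center_locus a b h \<subseteq> ellipse_set (k*a) (k*b)"
    proof
      fix X assume "X \<in> center_locus a b h"
      then obtain P1 P2 P3 where X: "X = tri_center h P1 P2 P3" and per: "periodic3 a b P1 P2 P3"
        by (auto simp: center_locus_def)
      have E: "P1 \<in> ellipse_set a b" "P2 \<in> ellipse_set a b" "P3 \<in> ellipse_set a b"
        using per by (auto simp: periodic3_def)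
      note PR = periodic_rels[OF ab per]
      have "zc a b X = of_real c * (zc a b P1+zc a b P2+zc a b P3)"
        unfolding X by (rule HC[OF E PR])
      also have "\<dots> = - of_real c * of_real (rc a b) * (zc a b P1*zc a b P2*zc a b P3)"
        using PR(5) by simp
      finally have "cmod (zc a b X) = c * rc a b"
        using unitP[OF E(1)] unitP[OF E(2)] unitP[OF E(3)] c cf(7) by (simp add: norm_mult)
      thus "X \<in> ellipse_set (k*a) (k*b)" using ell_iff[OF a0 b0 kp] by (simp add: k_def)
    qed
  next
    show "ellipse_set (k*a) (k*b) \<subseteq> center_locus a b h"
    proof
      fix X assume "X \<in> ellipse_set (k*a) (k*b)"
      hence cX: "cmod (zc a b X) = k" using ell_iff[OF a0 b0 kp] by simp
      define \<sigma> where "\<sigma> = - (zc a b X / of_real k)"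
      have s1: "cmod \<sigma> = 1" using cX kp by (simp add: \<sigma>_def norm_divide)
      hence sn: "\<sigma> \<noteq> 0" by auto
      obtain z1 z2 z3 where e2: "z1*z2+z1*z3+z2*z3 = - of_real (rc a b)"
        and e1: "z1+z2+z3 = - of_real (rc a b) * \<sigma>" and e3: "z1*z2*z3 = \<sigma>"
        using exists_roots[OF sn, of "rc a b"] by blast
      have u1: "cmod z1 = 1" by (rule unit_root[OF cf(7) cf(8) s1 cubic_of_rels[OF e2 e1 e3]])
      have u2: "cmod z2 = 1"
        by (rule unit_root[OF cf(7) cf(8) s1 cubic_of_rels[of z2 z1 z3]]) (use e1 e2 e3 in \<open>simp_all add: ac_simps\<close>)
      have u3: "cmod z3 = 1"
        by (rule unit_root[OF cf(7) cf(8) s1 cubic_of_rels[of z3 z1 z2]]) (use e1 e2 e3 in \<open>simp_all add: ac_simps\<close>)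
      have d12: "z1 \<noteq> z2"
      proof
        assume h: "z1 = z2"
        show False by (rule no_double[OF cf(7) cf(8) u1, of z3 \<sigma>]) (use e1 e2 e3 h in \<open>simp_all add: ac_simps\<close>)
      qed
      have d13: "z1 \<noteq> z3"
      proof
        assume h: "z1 = z3"
        show False by (rule no_double[OF cf(7) cf(8) u1, of z2 \<sigma>]) (use e1 e2 e3 h in \<open>simp_all add: ac_simps\<close>)
      qed
      have d23: "z2 \<noteq> z3"
      proof
        assume h: "z2 = z3"
        show False by (rule no_double[OF cf(7) cf(8) u2, of z1 \<sigma>]) (use e1 e2 e3 h in \<open>simp_all add: ac_simps\<close>)
      qed
      have e1': "z1+z2+z3 = - of_real (rc a b) * (z1*z2*z3)" using e1 e3 by simp
      note RP = rels_periodic[OF ab u1 u2 u3 d12 d13 d23 e2 e1']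
      define P1 P2 P3 where "P1 = (a*Re z1, b*Im z1)" "P2 = (a*Re z2, b*Im z2)" "P3 = (a*Re z3, b*Im z3)"
      have per: "periodic3 a b P1 P2 P3" and zz: "zc a b P1 = z1" "zc a b P2 = z2" "zc a b P3 = z3"
        using RP by (simp_all add: P1_P2_P3_def)
      have E: "P1 \<in> ellipse_set a b" "P2 \<in> ellipse_set a b" "P3 \<in> ellipse_set a b"
        using per by (auto simp: periodic3_def)
      have "zc a b (tri_center h P1 P2 P3) = of_real c * (z1+z2+z3)"
        using HC[OF E] zz d12 d13 d23 e2 e1' by simp
      also have "\<dots> = zc a b X"
        using kp c cf(7) unfolding e1 \<sigma>_def k_def by (simp add: field_simps)
      finally have "tri_center h P1 P2 P3 = X" using zc_inj[of a b "tri_center h P1 P2 P3" X] a0 b0 by auto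
      thus "X \<in> center_locus a b h" using per unfolding center_locus_def by blast
    qed
  qed
qed

theorem theorem1:
  fixes a b :: real
  assumes "a > b" and "b > 0"
  defines "c2 \<equiv> a\<^sup>2 - b\<^sup>2"
      and "\<delta> \<equiv> sqrt (a^4 - a\<^sup>2 * b\<^sup>2 + b^4)"
  defines "k2 \<equiv> (2 * \<delta> - a\<^sup>2 - b\<^sup>2) / (3 * c2)"
      and "k7 \<equiv> (2 * \<delta> - a\<^sup>2 - b\<^sup>2) / c2"
      and "k57 \<equiv> c2 / \<delta>"
  shows "center_locus a b (\<lambda>s1 s2 s3. 1 / s1) = ellipse_set (k2 * a) (k2 * b)
       \<and> center_locus a b (\<lambda>s1 s2 s3. 1 / (s1 * (s2 + s3 - s1))) = ellipse_set (k7 * a) (k7 * b)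
       \<and> center_locus a b (\<lambda>s1 s2 s3. 1 / (s2 + s3 - s1)) = ellipse_set (k57 * a) (k57 * b)"
proof -
  have ab: "a>b" "b>0" using assms by auto
  note cf = cfacts[OF ab]
  have dd: "\<delta> = dl a b" unfolding \<delta>_def dl_def by simp
  have cc: "c2 = Cc a b" unfolding c2_def Cc_def by simp
  have kk: "2 * \<delta> - a\<^sup>2 - b\<^sup>2 = 2*dl a b - Kc a b" unfolding dd Kc_def by simp
  have rr: "rc a b = 3*Cc a b/(Kc a b + 2*dl a b)" unfolding rc_def Mc_def by simp
  have key: "(2*dl a b - Kc a b)*(Kc a b + 2*dl a b) = 3*(Cc a b)^2"
    using cf(4) by (simp add: algebra_simps power2_eq_square)
  have Kd: "Kc a b + 2*dl a b > 0" using cf(1) cf(3) by simp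
  have k7e: "k7 = 1 * rc a b"
    unfolding k7_def kk cc rr using cf(2) Kd key by (simp add: field_simps power2_eq_square)
  have k2e: "k2 = (1/3) * rc a b"
    unfolding k2_def kk cc rr using cf(2) Kd key by (simp add: field_simps power2_eq_square)
  have k57e: "k57 = (Mc a b / dl a b) * rc a b"
    unfolding k57_def cc dd rc_def using cf(3) cf(5) by simp
  have L2: "center_locus a b (\<lambda>s1 s2 s3. 1 / s1) = ellipse_set (k2 * a) (k2 * b)"
    unfolding k2e by (rule locus[OF ab]) (simp, simp add: centers[OF ab])
  have L7: "center_locus a b (\<lambda>s1 s2 s3. 1 / (s1 * (s2 + s3 - s1))) = ellipse_set (k7 * a) (k7 * b)"
    unfolding k7e by (rule locus[OF ab]) (simp, simp add: centers[OF ab])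
  have L57: "center_locus a b (\<lambda>s1 s2 s3. 1 / (s2 + s3 - s1)) = ellipse_set (k57 * a) (k57 * b)"
    unfolding k57e by (rule locus[OF ab]) (use cf(3) cf(5) in simp, simp add: centers[OF ab])
  show ?thesis using L2 L7 L57 by blast
qed


end
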